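(* Let $K$ be a positive integer. Consider a nonempty configuration and an integer shift $G$ with $2^K\le A(G)<2^b$. In one outer iteration of the inter-level sampler, let the number of scanned levels be the number of level indices $\lambda,\lambda-1,\dots$ visited by the scan up to and including the level at which the scan stops (returns, or enters the refinement loop). Its expectation is at most $2b+\frac{N(N+1)}{2^{K+1}}$.
   Context: Fix an integer $b\ge 2$. There is a set $\mathcal L$ of $N$ levels, which are consecutive integers. Each level $\ell$ holds a finite (possibly empty) multiset of normalized significands, each an integer in $[2^{b-1},2^b)$. Let $z$ be the total number of stored significands over all levels; assume $z<2^b$. For each level, $SS_\ell$ is the sum of its significands (so $SS_\ell=0$ iff the level is empty); set $SS_\ell=0$ for integers $\ell\notin\mathcal L$. The level weight is $W_\ell=SS_\ell2^\ell$. For an integer global shift $G$, $A_\ell(G)=\lfloor W_\ell2^G\rfloor+1$ if $SS_\ell>0$ and $A_\ell(G)=0$ if $SS_\ell=0$; $A(G)=\sum_\ell A_\ell(G)$. The configuration is nonempty if $z\ge1$; then $\lambda$ denotes the largest nonempty level. Inter-level sampler (Algorithm 1), with shift $G$ and $A=A(G)$: it performs independent outer iterations. In an outer iteration, draw $x$ uniformly from $\{1,\dots,A\}$ and scan the level indices in decreasing order starting from $\lambda$ (empty levels included, with $A_\ell(G)=0$). At the current level $\ell$: if $x<A_\ell(G)$, return $\ell$; if $x=A_\ell(G)$, run the refinement loop for $m=1,2,\dots$: draw $r$ uniformly from $\{0,\dots,2^b-1\}$ independently, let $t=\lfloor SS_\ell 2^{\ell+G+mb}\rfloor \bmod 2^b$;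 if $r<t$ return $\ell$; else if $r>t$ or $\ell+G+mb\ge 0$, abandon this outer iteration and start a new one; otherwise continue with $m+1$. If $x>A_\ell(G)$, set $x\leftarrow x-A_\ell(G)$ and move to the next lower level. *)

theory Defs
  imports "HOL-Probability.Probability"
begin

text \<open>Levels are the consecutive integers lo, lo+1, ..., lo+N-1.
  A configuration assigns to each integer level a multiset of significands
  (empty outside the level set).\<close>

definition levels :: "int \<Rightarrow> nat \<Rightarrow> int set" where
  "levels lo N = {lo..<lo + int N}"

definition valid_config :: "nat \<Rightarrow> int \<Rightarrow> nat \<Rightarrow> (int \<Rightarrow> nat multiset) \<Rightarrow> bool" where
  "valid_config b lo N M \<longleftrightarrow>
     (\<forall>l. l \<notin> levels lo N \<longrightarrow> M l = {#}) \<and>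
     (\<forall>l s. s \<in># M l \<longrightarrow> 2 ^ (b - 1) \<le> s \<and> s < 2 ^ b) \<and>
     (\<Sum>l\<in>levels lo N. size (M l)) < 2 ^ b"

definition SS :: "(int \<Rightarrow> nat multiset) \<Rightarrow> int \<Rightarrow> nat" where
  "SS M l = sum_mset (M l)"

definition W :: "(int \<Rightarrow> nat multiset) \<Rightarrow> int \<Rightarrow> real" where
  "W M l = real (SS M l) * (2::real) powi l"

definition Alev :: "(int \<Rightarrow> nat multiset) \<Rightarrow> int \<Rightarrow> int \<Rightarrow> int" where
  "Alev M G l = (if SS M l > 0 then \<lfloor>W M l * (2::real) powi G\<rfloor> + 1 else 0)"

definition Atot :: "int \<Rightarrow> nat \<Rightarrow> (int \<Rightarrow> nat multiset) \<Rightarrow> int \<Rightarrow> int" where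
  "Atot lo N M G = (\<Sum>l\<in>levels lo N. Alev M G l)"

definition topLevel :: "int \<Rightarrow> nat \<Rightarrow> (int \<Rightarrow> nat multiset) \<Rightarrow> int" where
  "topLevel lo N M = Max {l \<in> levels lo N. M l \<noteq> {#}}"

text \<open>Number of levels lambda, lambda-1, ... visited by the scan for the draw x,
  up to and including the level where it stops (x < A_l: return; x = A_l: refinement).\<close>

definition scanned :: "int \<Rightarrow> nat \<Rightarrow> (int \<Rightarrow> nat multiset) \<Rightarrow> int \<Rightarrow> nat \<Rightarrow> nat" where
  "scanned lo N M G x =
     (LEAST n::nat. int x \<le> (\<Sum>i<n. Alev M G (topLevel lo N M - int i)))"

end

theory Submission
  imports Defs
begin

lemma scan_sum:
  fixes c :: "nat \<Rightarrow> nat"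
  shows "(\<Sum>x\<in>{1..(\<Sum>i<n. c i)}. (LEAST m. x \<le> (\<Sum>i<m. c i))) = (\<Sum>i<n. (i+1) * c i)"
proof (induction n)
  case 0
  then show ?case by simp
next
  case (Suc n)
  let ?S = "\<lambda>m. (\<Sum>i<m. c i)"
  have mono: "m \<le> n \<Longrightarrow> ?S m \<le> ?S n" for m
    by (rule sum_mono2) auto
  have val: "(LEAST m. x \<le> ?S m) = Suc n" if "?S n < x" "x \<le> ?S (Suc n)" for x
  proof (rule Least_equality)
    show "x \<le> ?S (Suc n)" by fact
  next
    fix y assume "x \<le> ?S y"
    show "Suc n \<le> y"
    proof (rule ccontr)
      assume "\<not> Suc n \<le> y"
      then have "?S y \<le> ?S n" using mono by simp
      then show False using that \<open>x \<le> ?S y\<close> by simp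
    qed
  qed
  have split: "{1..?S (Suc n)} = {1..?S n} \<union> {?S n + 1..?S n + c n}" by auto
  have "(\<Sum>x\<in>{1..?S (Suc n)}. (LEAST m. x \<le> ?S m))
      = (\<Sum>x\<in>{1..?S n}. (LEAST m. x \<le> ?S m)) + (\<Sum>x\<in>{?S n + 1..?S n + c n}. (LEAST m. x \<le> ?S m))"
    unfolding split by (rule sum.union_disjoint) auto
  also have "(\<Sum>x\<in>{?S n + 1..?S n + c n}. (LEAST m. x \<le> ?S m)) = (\<Sum>x\<in>{?S n + 1..?S n + c n}. Suc n)"
    by (rule sum.cong) (auto intro: val)
  also have "\<dots> = c n * Suc n" by simp
  finally show ?case using Suc by simp
qed

lemma weighted:
  fixes s :: "nat \<Rightarrow> real" and b n0 :: nat
  assumes "b \<ge> 1" "n0 \<ge> 1" "\<And>i. s i \<ge> 0" "s 0 \<ge> 2^(b-1)" "(\<Sum>i<n0. s i) < 2^(2*b)"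
  shows "(\<Sum>i<n0. real (i+1) * (s i / 2^i)) \<le> 2 * b * (\<Sum>i<n0. s i / 2^i)"
proof -
  define g where "g i = (real (i+1) - 2*b) * (s i / 2^i)" for i
  have key: "(real (i+1) - 2*b) / 2^i \<le> 1 / 2^(2*b)" for i
  proof (cases "i + 1 \<le> 2*b")
    case True
    then have "real (i+1) - 2*b \<le> 0" by linarith
    then have "(real (i+1) - 2*b) / 2^i \<le> 0" by (simp add: divide_nonpos_pos)
    also have "0 \<le> 1 / (2::real)^(2*b)" by simp
    finally show ?thesis .
  next
    case False
    then obtain j where j: "i = 2*b + j" by (metis add_leD1 le_add_diff_inverse not_le Suc_eq_plus1 less_Suc_eq_le)
    have "real j + 1 \<le> 2^j"
    proof (induction j)
      case 0 then show ?case by simp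
    next
      case (Suc j)
      have "(1::real) \<le> 2^j" by simp
      with Suc show ?case by simp
    qed
    then have "real (i+1) - 2*b \<le> 2^j" using j by simp
    then have "(real (i+1) - 2*b) / 2^i \<le> 2^j / 2^i" by (simp add: divide_right_mono)
    also have "2^j / 2^i = 1 / (2::real)^(2*b)" using j by (simp add: power_add)
    finally show ?thesis .
  qed
  have gb: "g i \<le> s i / 2^(2*b)" for i
  proof -
    have "g i = ((real (i+1) - 2*b) / 2^i) * s i" unfolding g_def by simp
    also have "\<dots> \<le> (1 / 2^(2*b)) * s i" using key[of i] assms(3)[of i] by (rule mult_right_mono)
    finally show ?thesis by simp
  qed
  obtain m where m: "n0 = Suc m" using assms(2) by (cases n0) auto
  have "(\<Sum>i<n0. g i) = g 0 + (\<Sum>i<m. g (Suc i))" unfolding m by (rule sum.lessThan_Suc_shift)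
  also have "(\<Sum>i<m. g (Suc i)) \<le> (\<Sum>i<m. s (Suc i) / 2^(2*b))" by (rule sum_mono) (rule gb)
  also have "\<dots> \<le> (\<Sum>i<n0. s i / 2^(2*b))"
    unfolding m sum.lessThan_Suc_shift using assms(3)[of 0] by simp
  also have "\<dots> = (\<Sum>i<n0. s i) / 2^(2*b)" by (simp add: sum_divide_distrib)
  also have "\<dots> < 1" using assms(5) by simp
  finally have 1: "(\<Sum>i<n0. g i) < g 0 + 1" by simp
  have "g 0 = (1 - 2 * real b) * s 0" unfolding g_def by simp
  also have "\<dots> \<le> (1 - 2 * real b) * 2^(b-1)"
    using assms(1,4) by (intro mult_left_mono_neg) auto
  also have "\<dots> \<le> -1"
  proof -
    have "(1::real) \<le> 2^(b-1)" by simp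
    moreover have "1 - 2 * real b \<le> -1" using assms(1) by simp
    ultimately show ?thesis by (smt (verit) mult_le_cancel_left1 mult_minus_left)
  qed
  finally have "(\<Sum>i<n0. g i) \<le> 0" using 1 by simp
  moreover have "(\<Sum>i<n0. g i) = (\<Sum>i<n0. real (i+1) * (s i / 2^i)) - 2 * b * (\<Sum>i<n0. s i / 2^i)"
  proof -
    have "(\<Sum>i<n0. g i) = (\<Sum>i<n0. real (i+1) * (s i / 2^i) - 2 * b * (s i / 2^i))"
      unfolding g_def by (rule sum.cong) (auto simp: left_diff_distrib diff_divide_distrib)
    also have "\<dots> = (\<Sum>i<n0. real (i+1) * (s i / 2^i)) - (\<Sum>i<n0. 2 * b * (s i / 2^i))"
      by (rule sum_subtractf)
    finally show ?thesis by (simp add: sum_distrib_left)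
  qed
  ultimately show ?thesis by simp
qed

lemma mem_le_sum_mset: "(x::nat) \<in># X \<Longrightarrow> x \<le> sum_mset X"
  by (induction X) auto

lemma reindex_down:
  fixes F :: "int \<Rightarrow> 'a::comm_monoid_add"
  shows "(\<Sum>i<n. F (t - int i)) = (\<Sum>l\<in>{t - int n + 1..t}. F l)"
proof (induction n)
  case 0 then show ?case by simp
next
  case (Suc n)
  have "{t - int (Suc n) + 1..t} = insert (t - int n) {t - int n + 1..t}" by auto
  then show ?case using Suc by (simp add: add.commute)
qed

lemma gauss_real: "(\<Sum>i<n. real (i+1)) = real n * (real n + 1) / 2"
  by (induction n) (auto simp: field_simps)

lemma sum_mset_bound:
  fixes X :: "nat multiset"
  assumes "\<And>s. s \<in># X \<Longrightarrow> s < B"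
  shows "sum_mset X \<le> size X * B"
  using assms
proof (induction X)
  case empty then show ?case by simp
next
  case (add x X)
  then have "x < B" "sum_mset X \<le> size X * B" by auto
  then show ?case by simp
qed

theorem mainTheorem13:
  fixes b K N :: nat and lo G :: int and M :: "int \<Rightarrow> nat multiset"
  assumes "b \<ge> 2"
    and "valid_config b lo N M"
    and "\<exists>l. M l \<noteq> {#}"
    and "K \<ge> 1"
    and "2 ^ K \<le> Atot lo N M G"
    and "Atot lo N M G < 2 ^ b"
  shows "measure_pmf.expectation (pmf_of_set {1..nat (Atot lo N M G)})
           (\<lambda>x. real (scanned lo N M G x))
         \<le> 2 * real b + real N * (real N + 1) / 2 ^ (K + 1)"
proof -
  define lam where "lam = topLevel lo N M"
  define a where "a i = Alev M G (lam - int i)" for i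
  define c where "c i = nat (a i)" for i
  define n0 where "n0 = nat (lam - lo) + 1"
  define A where "A = Atot lo N M G"
  have out: "l \<notin> levels lo N \<Longrightarrow> M l = {#}" for l
    using assms(2) unfolding valid_config_def by blast
  have elem: "s \<in># M l \<Longrightarrow> 2 ^ (b - 1) \<le> s \<and> s < 2 ^ b" for l s
    using assms(2) unfolding valid_config_def by blast
  have zlt: "(\<Sum>l\<in>levels lo N. size (M l)) < 2 ^ b"
    using assms(2) unfolding valid_config_def by blast
  have Lfin: "finite (levels lo N)" unfolding levels_def by simp
  have nonE: "{l\<in>levels lo N. M l \<noteq> {#}} \<noteq> {}" using assms(3) out by blast
  have lamin: "lam \<in> {l\<in>levels lo N. M l \<noteq> {#}}"
    unfolding lam_def topLevel_def using Lfin nonE by (intro Max_in) auto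
  then have lamL: "lam \<in> levels lo N" and lamM: "M lam \<noteq> {#}" by auto
  have above: "lam < l \<Longrightarrow> M l = {#}" for l
  proof (rule ccontr)
    assume "lam < l" "M l \<noteq> {#}"
    then have "l \<in> levels lo N" using out by blast
    then have "l \<le> lam" unfolding lam_def topLevel_def using Lfin \<open>M l \<noteq> {#}\<close>
      by (intro Max_ge) auto
    then show False using \<open>lam < l\<close> by simp
  qed
  have lamlo: "lo \<le> lam" "lam < lo + int N" using lamL unfolding levels_def by auto
  have n0N: "n0 \<le> N" "n0 \<ge> 1" using lamlo unfolding n0_def by auto
  have lo_eq: "lam - int n0 + 1 = lo" unfolding n0_def using lamlo by simp
  have b1: "(1::nat) \<le> 2 ^ (b - 1)" by simp
  have SSge: "M l \<noteq> {#} \<Longrightarrow> 2 ^ (b - 1) \<le> SS M l" for l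
  proof -
    assume "M l \<noteq> {#}"
    then obtain s where s: "s \<in># M l" by auto
    then have "2 ^ (b - 1) \<le> s" using elem by blast
    also have "s \<le> sum_mset (M l)" using s
      by (rule mem_le_sum_mset)
    finally show ?thesis unfolding SS_def .
  qed
  have SSpos: "SS M l > 0 \<longleftrightarrow> M l \<noteq> {#}" for l
  proof
    assume "SS M l > 0" then show "M l \<noteq> {#}" unfolding SS_def by auto
  next
    assume "M l \<noteq> {#}" then show "SS M l > 0" using SSge[of l] b1 by linarith
  qed
  have SSle: "SS M l \<le> size (M l) * 2 ^ b" for l
    unfolding SS_def by (rule sum_mset_bound) (use elem in blast)
  have Wnn: "W M l \<ge> 0" for l unfolding W_def by simp
  have Alev_nn: "Alev M G l \<ge> 0" for l
    unfolding Alev_def using Wnn[of l] by (simp add: zero_le_mult_iff)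
  have Alev_zero: "M l = {#} \<Longrightarrow> Alev M G l = 0" for l
    unfolding Alev_def using SSpos[of l] by simp
  have Alev_lo: "real_of_int (Alev M G l) \<ge> W M l * 2 powi G" for l
  proof (cases "M l = {#}")
    case True
    then have "SS M l = 0" using SSpos[of l] by simp
    then show ?thesis using True Alev_zero[of l] unfolding W_def by simp
  next
    case False
    then show ?thesis unfolding Alev_def using SSpos[of l] by (simp add: real_of_int_floor_add_one_ge)
  qed
  have Alev_hi: "real_of_int (Alev M G l) \<le> W M l * 2 powi G + (if M l = {#} then 0 else 1)" for l
  proof (cases "M l = {#}")
    case True
    then show ?thesis using Alev_zero[of l] Wnn[of l] by simp
  next
    case False
    then show ?thesis unfolding Alev_def using SSpos[of l] by simp
  qed
  have A_eq: "A = (\<Sum>i<n0. a i)"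
  proof -
    have "A = (\<Sum>l\<in>levels lo N. Alev M G l)" unfolding A_def Atot_def ..
    also have "\<dots> = (\<Sum>l\<in>{lo..lam}. Alev M G l)"
    proof (rule sum.mono_neutral_right[OF Lfin])
      show "{lo..lam} \<subseteq> levels lo N" using lamlo unfolding levels_def by auto
      show "\<forall>l\<in>levels lo N - {lo..lam}. Alev M G l = 0"
        using above Alev_zero unfolding levels_def by auto
    qed
    also have "\<dots> = (\<Sum>i<n0. a i)" unfolding a_def reindex_down lo_eq ..
    finally show ?thesis .
  qed
  have a_nn: "a i \<ge> 0" for i unfolding a_def by (rule Alev_nn)
  have a_zero: "a i = 0" if "n0 \<le> i" for i
  proof -
    have "lam - int i < lo" using that lo_eq by simp
    then have "lam - int i \<notin> levels lo N" unfolding levels_def by auto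
    then show ?thesis unfolding a_def using out Alev_zero by blast
  qed
  have csum: "int (\<Sum>i<m. c i) = (\<Sum>i<m. a i)" for m
    unfolding c_def using a_nn by simp
  have S_n0: "(\<Sum>i<n0. c i) = nat A"
  proof -
    have "int (\<Sum>i<n0. c i) = A" using csum[of n0] A_eq by simp
    then show ?thesis by (metis nat_int)
  qed
  have scan_eq: "scanned lo N M G x = (LEAST m. x \<le> (\<Sum>i<m. c i))" for x
  proof -
    have "(int x \<le> (\<Sum>i<m. a i)) = (x \<le> (\<Sum>i<m. c i))" for m
      using csum[of m] by linarith
    then show ?thesis unfolding scanned_def a_def lam_def by simp
  qed
  have Apos: "A \<ge> 2 ^ K" using assms(5) unfolding A_def by simp
  then have "real_of_int (2 ^ K) \<le> real_of_int A" by (simp only: of_int_le_iff)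
  then have Apos': "real_of_int A \<ge> 2 ^ K" by simp
  have Agt0: "A > 0"
  proof -
    have "(0::int) < 2 ^ K" by simp
    then show ?thesis using Apos by linarith
  qed
  have "measure_pmf.expectation (pmf_of_set {1..nat A}) (\<lambda>x. real (scanned lo N M G x))
      = (\<Sum>x\<in>{1..nat A}. real (scanned lo N M G x)) / real (card {1..nat A})"
    using Agt0 by (intro integral_pmf_of_set) auto
  also have "(\<Sum>x\<in>{1..nat A}. real (scanned lo N M G x)) = real (\<Sum>i<n0. (i+1) * c i)"
    unfolding of_nat_sum[symmetric] scan_eq S_n0[symmetric] scan_sum ..
  also have "real (card {1..nat A}) = real_of_int A" using Agt0 by simp
  finally have E: "measure_pmf.expectation (pmf_of_set {1..nat A}) (\<lambda>x. real (scanned lo N M G x))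
      = (\<Sum>i<n0. real (i+1) * real (c i)) / real_of_int A" by (simp add: algebra_simps)
  define w where "w i = W M (lam - int i) * 2 powi G" for i
  define s where "s i = real (SS M (lam - int i))" for i
  define C where "C = (2::real) powi (lam + G)"
  have Cpos: "C > 0" unfolding C_def by simp
  have w_eq: "w i = C * (s i / 2 ^ i)" for i
  proof -
    have "(2::real) powi (lam - int i) * 2 powi G = 2 powi (lam + G - int i)"
      by (simp add: power_int_add[symmetric] algebra_simps)
    also have "\<dots> = C / 2 ^ i" unfolding C_def by (simp add: power_int_diff)
    finally show ?thesis unfolding w_def W_def s_def by (simp add: mult.assoc)
  qed
  have c_real: "real (c i) = real_of_int (a i)" for i unfolding c_def using a_nn[of i] by simp
  have c_lo: "w i \<le> real (c i)" for i unfolding c_real a_def w_def by (rule Alev_lo)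
  have c_hi: "real (c i) \<le> w i + 1" for i
    unfolding c_real a_def w_def using Alev_hi[of "lam - int i"] by (cases "M (lam - int i) = {#}") simp_all
  have sumw: "(\<Sum>i<n0. w i) \<le> real_of_int A"
  proof -
    have "(\<Sum>i<n0. w i) \<le> (\<Sum>i<n0. real (c i))" by (rule sum_mono) (rule c_lo)
    also have "\<dots> = real_of_int A"
    proof -
      have "int (\<Sum>i<n0. c i) = A" using csum[of n0] A_eq by simp
      then have "real_of_int (int (\<Sum>i<n0. c i)) = real_of_int A" by simp
      then show ?thesis by simp
    qed
    finally show ?thesis .
  qed
  have s_nn: "s i \<ge> 0" for i unfolding s_def by simp
  have s0: "s 0 \<ge> 2 ^ (b - 1)"
  proof -
    have "2 ^ (b - 1) \<le> SS M lam" using SSge lamM by blast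
    then have "real (2 ^ (b - 1)) \<le> real (SS M lam)" by (simp only: of_nat_le_iff)
    then show ?thesis unfolding s_def by simp
  qed
  have ssum: "(\<Sum>i<n0. s i) < 2 ^ (2 * b)"
  proof -
    have "(\<Sum>i<n0. SS M (lam - int i)) = (\<Sum>l\<in>{lo..lam}. SS M l)"
      unfolding reindex_down lo_eq ..
    also have "\<dots> \<le> (\<Sum>l\<in>levels lo N. SS M l)"
      using lamlo Lfin by (intro sum_mono2) (auto simp: levels_def)
    also have "\<dots> \<le> (\<Sum>l\<in>levels lo N. size (M l) * 2 ^ b)" by (rule sum_mono) (rule SSle)
    also have "\<dots> = (\<Sum>l\<in>levels lo N. size (M l)) * 2 ^ b" by (simp add: sum_distrib_right)
    also have "\<dots> < 2 ^ b * 2 ^ b" using zlt by simp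
    also have "\<dots> = 2 ^ (2 * b)" by (simp add: power_add[symmetric] mult_2)
    finally have "(\<Sum>i<n0. SS M (lam - int i)) < 2 ^ (2 * b)" .
    then have "real (\<Sum>i<n0. SS M (lam - int i)) < real (2 ^ (2 * b))" by (simp only: of_nat_less_iff)
    then show ?thesis unfolding s_def by simp
  qed
  have wt: "(\<Sum>i<n0. real (i+1) * (s i / 2^i)) \<le> 2 * b * (\<Sum>i<n0. s i / 2^i)"
    using assms(1) n0N(2) s_nn s0 ssum by (intro weighted) auto
  have wt2: "(\<Sum>i<n0. real (i+1) * w i) \<le> 2 * b * (\<Sum>i<n0. w i)"
  proof -
    have "(\<Sum>i<n0. real (i+1) * w i) = C * (\<Sum>i<n0. real (i+1) * (s i / 2^i))"
      unfolding w_eq sum_distrib_left by (simp add: algebra_simps)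
    also have "\<dots> \<le> C * (2 * b * (\<Sum>i<n0. s i / 2^i))" using wt Cpos by simp
    also have "\<dots> = 2 * b * (\<Sum>i<n0. w i)"
      unfolding w_eq sum_distrib_left by (simp add: algebra_simps)
    finally show ?thesis .
  qed
  have "(\<Sum>i<n0. real (i+1) * real (c i)) \<le> (\<Sum>i<n0. real (i+1) * w i + real (i+1))"
  proof (rule sum_mono)
    fix i
    have "real (i+1) * real (c i) \<le> real (i+1) * (w i + 1)" using c_hi[of i] by (intro mult_left_mono) auto
    then show "real (i+1) * real (c i) \<le> real (i+1) * w i + real (i+1)" by (simp add: algebra_simps)
  qed
  also have "\<dots> = (\<Sum>i<n0. real (i+1) * w i) + real n0 * (real n0 + 1) / 2"
    by (simp only: sum.distrib gauss_real)
  also have "\<dots> \<le> 2 * b * real_of_int A + real N * (real N + 1) / 2"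
  proof -
    have "2 * b * (\<Sum>i<n0. w i) \<le> 2 * b * real_of_int A" using sumw by (simp add: mult_left_mono)
    moreover have "real n0 * (real n0 + 1) \<le> real N * (real N + 1)"
      using n0N by (intro mult_mono) auto
    ultimately show ?thesis using wt2 by simp
  qed
  finally have num: "(\<Sum>i<n0. real (i+1) * real (c i)) \<le> 2 * b * real_of_int A + real N * (real N + 1) / 2" .
  have "(\<Sum>i<n0. real (i+1) * real (c i)) / real_of_int A
      \<le> (2 * b * real_of_int A + real N * (real N + 1) / 2) / real_of_int A"
    using num Agt0 by (simp add: divide_right_mono)
  also have "\<dots> = 2 * b + real N * (real N + 1) / (2 * real_of_int A)"
    using Agt0 by (simp add: field_simps)
  also have "\<dots> \<le> 2 * b + real N * (real N + 1) / 2 ^ (K + 1)"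
  proof -
    have "(2::real) ^ (K + 1) \<le> 2 * real_of_int A" using Apos' by simp
    then have "real N * (real N + 1) / (2 * real_of_int A) \<le> real N * (real N + 1) / 2 ^ (K + 1)"
      using Agt0 by (intro divide_left_mono) auto
    then show ?thesis by simp
  qed
  finally show ?thesis using E unfolding A_def by simp
qed

end
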